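(* Let $\eta>0$ and let $\{\mathbf{x}_j\}_{j=1}^m\subseteq\mathcal{X}_d$ be a finite set of points with $\|\mathbf{x}_i-\mathbf{x}_j\|_2\ge\eta$ for all $i\ne j$. Then for each $j\in[m]$ there exists a unit vector $\mathbf{v}_j\in\mathbb{R}^{2d}$ such that $\mathbf{v}_j^\top\mathbf{x}_j=\sqrt2$ and $\mathbf{x}_j$ is the only point of $\{\mathbf{x}_i\}_{i=1}^m$ contained in $T_j:=\{\mathbf{x}\in\mathbb{R}^{2d}:|\mathbf{v}_j^\top\mathbf{x}-\sqrt2|<\frac{\eta^2}{2\sqrt2}\}$.
   Context: $\mathcal{X}_d=\mathbb{S}^{d-1}\times\mathbb{S}^{d-1}\subset\mathbb{R}^{2d}$. *)

theory Defs
  imports "HOL-Analysis.Analysis"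
begin

text \<open>R^{2d} is modelled as the product real^'d \<times> real^'d, whose inner product
  and norm are the Euclidean ones of R^{2d}.  X_d = S^{d-1} \<times> S^{d-1}.\<close>

definition X_d :: "((real^'d) \<times> (real^'d)) set" where
  "X_d = sphere 0 1 \<times> sphere 0 1"

end

theory Submission
  imports Defs
begin

lemma Xd_inner_self:
  assumes "y \<in> X_d" shows "inner y y = 2"
proof -
  obtain a b where y: "y = (a,b)" by (cases y)
  have "norm a = 1" "norm b = 1" using assms y by (auto simp: X_d_def)
  then have "inner a a = 1" "inner b b = 1" by (simp_all add: dot_square_norm)
  then show ?thesis using y by (simp add: inner_prod_def)
qed

lemma Xd_dist:
  assumes "y \<in> X_d" "z \<in> X_d"
  shows "(norm (z - y))\<^sup>2 = 4 - 2 * inner y z"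
proof -
  have "(norm (z - y))\<^sup>2 = inner (z - y) (z - y)" by (simp add: power2_norm_eq_inner)
  also have "\<dots> = inner z z + inner y y - 2 * inner y z"
    by (simp add: inner_diff_left inner_diff_right inner_commute)
  finally show ?thesis using Xd_inner_self[OF assms(1)] Xd_inner_self[OF assms(2)] by simp
qed

lemma sq_less: "(d::real) \<ge> 0 \<Longrightarrow> e > 0 \<Longrightarrow> d\<^sup>2 < e\<^sup>2 \<longleftrightarrow> d < e"
proof
  assume "d\<^sup>2 < e\<^sup>2" "0 \<le> d" "e > 0" then show "d < e" using power_less_imp_less_base[of d 2 e] by simp
next
  assume "d < e" "0 \<le> d" then show "d\<^sup>2 < e\<^sup>2" using power_strict_mono[of d e 2] by simp
qed

theorem lemma17:
  fixes \<eta> :: real and m :: nat and x :: "nat \<Rightarrow> (real^'d) \<times> (real^'d)"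
  assumes "\<eta> > 0"
    and "\<And>j. j \<in> {1..m} \<Longrightarrow> x j \<in> X_d"
    and "\<And>i j. i \<in> {1..m} \<Longrightarrow> j \<in> {1..m} \<Longrightarrow> i \<noteq> j \<Longrightarrow> norm (x i - x j) \<ge> \<eta>"
  shows "\<forall>j\<in>{1..m}. \<exists>v :: (real^'d) \<times> (real^'d). norm v = 1 \<and> inner v (x j) = sqrt 2 \<and>
           (\<forall>i\<in>{1..m}. \<bar>inner v (x i) - sqrt 2\<bar> < \<eta>\<^sup>2 / (2 * sqrt 2) \<longleftrightarrow> x i = x j)"
proof
  fix j assume j: "j \<in> {1..m}"
  have xj: "x j \<in> X_d" using assms(2) j .
  have s2: "sqrt 2 * sqrt 2 = (2::real)" by simp
  have s2p: "sqrt 2 > (0::real)" by simp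
  define v where "v = (1 / sqrt 2) *\<^sub>R x j"
  have nxj: "norm (x j) = sqrt 2" using Xd_inner_self[OF xj] by (simp add: norm_eq_sqrt_inner)
  have "norm v = 1" unfolding v_def using nxj by simp
  moreover have "inner v (x j) = sqrt 2" unfolding v_def using Xd_inner_self[OF xj] s2 s2p
    by (simp add: field_simps)
  moreover have "\<bar>inner v (x i) - sqrt 2\<bar> < \<eta>\<^sup>2 / (2 * sqrt 2) \<longleftrightarrow> x i = x j"
    if i: "i \<in> {1..m}" for i
  proof -
    have xi: "x i \<in> X_d" using assms(2) i .
    define d where "d = norm (x i - x j)"
    have d0: "d \<ge> 0" unfolding d_def by simp
    have ip: "inner (x j) (x i) = 2 - d\<^sup>2 / 2" using Xd_dist[OF xj xi] unfolding d_def by linarith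
    have "inner v (x i) - sqrt 2 = (2 - d\<^sup>2/2) / sqrt 2 - sqrt 2"
      unfolding v_def using ip by simp
    also have "\<dots> = - (d\<^sup>2 / (2 * sqrt 2))" using s2p s2
      by (simp add: field_simps)
    finally have e: "\<bar>inner v (x i) - sqrt 2\<bar> = d\<^sup>2 / (2 * sqrt 2)" by simp
    have "d\<^sup>2 / (2 * sqrt 2) < \<eta>\<^sup>2 / (2 * sqrt 2) \<longleftrightarrow> d < \<eta>"
    proof -
      have "d\<^sup>2 / (2 * sqrt 2) < \<eta>\<^sup>2 / (2 * sqrt 2) \<longleftrightarrow> d\<^sup>2 < \<eta>\<^sup>2"
        using s2p by (simp add: divide_less_cancel)
      also have "\<dots> \<longleftrightarrow> d < \<eta>" using d0 assms(1) by (rule sq_less)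
      finally show ?thesis .
    qed
    moreover have "d < \<eta> \<longleftrightarrow> x i = x j"
    proof
      assume "d < \<eta>" then have "i = j" using assms(3)[OF i j] unfolding d_def by force
      then show "x i = x j" by simp
    next
      assume "x i = x j" then show "d < \<eta>" using assms(1) unfolding d_def by simp
    qed
    ultimately show ?thesis using e by simp
  qed
  ultimately show "\<exists>v. norm v = 1 \<and> inner v (x j) = sqrt 2 \<and>
           (\<forall>i\<in>{1..m}. \<bar>inner v (x i) - sqrt 2\<bar> < \<eta>\<^sup>2 / (2 * sqrt 2) \<longleftrightarrow> x i = x j)" by blast
qed

end
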